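(* Let $\mathcal C$ be a concept hierarchy, $r_1,r_2,\epsilon\in[0,1]$, $a>0$ a real with $r_1\le ar_2(1-\epsilon)$, $m$ a positive integer, and let $\mathcal L$ be the network defined below with fixed sets $F$ and $E$ satisfying the stated constraints. Then for every $B\subseteq C_0$ presented at time 0 and every $c\in supp_{r_2}(B)$, at least $m(1-\epsilon)$ of the neurons $v\in reps(c)$ fire at time $level(c)$.
   Context: Concept hierarchies: fix positive integers $\ell_{max},n,k$. A universal set $D$ of concepts is partitioned into disjoint sets $D_0,\dots,D_{\ell_{max}}$ with $|D_0|=n$; $level(c)=\ell$ for $c\in D_\ell$. A concept hierarchy $\mathcal C$ consists of $C\subseteq D$, with $C_\ell=C\cap D_\ell$, and for each $c\in C_\ell$ with $1\le\ell\le\ell_{max}$ a set $children(c)\subseteq C_{\ell-1}$, such that $|C_{\ell_{max}}|=k$, $|children(c)|=k$ for all such $c$, and $children(c)\cap children(c')=\emptyset$ for distinct $c,c'\in C_\ell$. For $B\subseteq D_0$ and $r\in[0,1]$: $B(0)=B\cap C_0$; for $1\le\ell\le\ell_{max}$, $B(\ell)=\{c\in C_\ell:|children(c)\cap B(\ell-1)|\ge rk\}$; $supp_r(B)=\bigcup_{\ell}B(\ell)$. Network $\mathcal L$: neurons partitioned into layers $N_0,\dots,N_{\ell_{max}}$. Each $c\in D_0$ has a set $reps(c)$ of $m$ neurons in $N_0$, each $c\in C$ with $level(c)\ge1$ a set $reps(c)$ of $m$ neurons in $N_{level(c)}$, all pairwise disjoint. $E$ is a set of pairs $(u,v)$ with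 $v\in reps(c)$ and $u\in reps(c')$ for some child $c'$ of $c$; for $u\in N_{\ell-1}$, $v\in N_\ell$, $w(u,v)=1$ iff $(u,v)\in E$, else $0$. Threshold $\tau=ar_2km(1-\epsilon)$. A fixed set $F$ of neurons is failed (failed neurons never fire). Constraints: for every concept $c$, at least $m(1-\epsilon)$ neurons of $reps(c)$ are not in $F$; and for every $c$ with $level(c)\ge1$, every $v\in reps(c)$ and every child $c'$ of $c$, there are at least $am(1-\epsilon)$ neurons $u\in reps(c')\setminus F$ with $(u,v)\in E$. Input $B\subseteq C_0$ presented at time 0: a layer-0 neuron fires at time 0 iff it is in $\bigcup_{b\in B}reps(b)\setminus F$, and no layer-0 neuron fires at any other time. A non-failed $v\in N_\ell$, $\ell\ge1$, does not fire at time 0 and fires at time $t\ge1$ iff $\sum_{u\in N_{\ell-1}}w(u,v)x_u(t-1)\ge\tau$, where $x_u(s)\in\{0,1\}$ indicates whether $u$ fires at time $s$. *)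

theory Defs
  imports Complex_Main
begin

text \<open>Concepts have type 'c, neurons type 'n. The universal concept set D is partitioned
  into D_0,...,D_lmax via a level function: D_l = {c \<in> D. level c = l}.\<close>

definition concept_hierarchy ::
  "nat \<Rightarrow> nat \<Rightarrow> nat \<Rightarrow> 'c set \<Rightarrow> ('c \<Rightarrow> nat) \<Rightarrow> 'c set \<Rightarrow> ('c \<Rightarrow> 'c set) \<Rightarrow> bool" where
  "concept_hierarchy lmax n k D level C children \<longleftrightarrow>
     lmax > 0 \<and> n > 0 \<and> k > 0 \<and>
     (\<forall>c\<in>D. level c \<le> lmax) \<and>
     finite {c\<in>D. level c = 0} \<and> card {c\<in>D. level c = 0} = n \<and>
     C \<subseteq> D \<and>
     finite {c\<in>C. level c = lmax} \<and> card {c\<in>C. level c = lmax} = k \<and>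
     (\<forall>c\<in>C. 1 \<le> level c \<longrightarrow>
        children c \<subseteq> {c'\<in>C. level c' = level c - 1} \<and>
        finite (children c) \<and> card (children c) = k) \<and>
     (\<forall>c\<in>C. \<forall>c'\<in>C. 1 \<le> level c \<longrightarrow> level c' = level c \<longrightarrow> c \<noteq> c' \<longrightarrow>
        children c \<inter> children c' = {})"

primrec Blev ::
  "'c set \<Rightarrow> ('c \<Rightarrow> nat) \<Rightarrow> ('c \<Rightarrow> 'c set) \<Rightarrow> nat \<Rightarrow> real \<Rightarrow> 'c set \<Rightarrow> nat \<Rightarrow> 'c set" where
  "Blev C level children k r B 0 = B \<inter> {c\<in>C. level c = 0}"
| "Blev C level children k r B (Suc l) =
     {c\<in>C. level c = Suc l \<and> real (card (children c \<inter> Blev C level children k r B l)) \<ge> r * real k}"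

definition supp ::
  "nat \<Rightarrow> 'c set \<Rightarrow> ('c \<Rightarrow> nat) \<Rightarrow> ('c \<Rightarrow> 'c set) \<Rightarrow> nat \<Rightarrow> real \<Rightarrow> 'c set \<Rightarrow> 'c set" where
  "supp lmax C level children k r B = (\<Union>l\<in>{0..lmax}. Blev C level children k r B l)"

definition network_ok ::
  "nat \<Rightarrow> 'c set \<Rightarrow> ('c \<Rightarrow> nat) \<Rightarrow> 'c set \<Rightarrow> ('c \<Rightarrow> 'c set) \<Rightarrow>
   'n set \<Rightarrow> ('n \<Rightarrow> nat) \<Rightarrow> ('c \<Rightarrow> 'n set) \<Rightarrow> ('n \<times> 'n) set \<Rightarrow> 'n set \<Rightarrow>
   nat \<Rightarrow> real \<Rightarrow> real \<Rightarrow> bool" where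
  "network_ok lmax D level C children N layer reps E F m a \<epsilon> \<longleftrightarrow>
     finite N \<and> (\<forall>u\<in>N. layer u \<le> lmax) \<and>
     (\<forall>c\<in>D. level c = 0 \<longrightarrow> reps c \<subseteq> {u\<in>N. layer u = 0} \<and> card (reps c) = m) \<and>
     (\<forall>c\<in>C. 1 \<le> level c \<longrightarrow> reps c \<subseteq> {u\<in>N. layer u = level c} \<and> card (reps c) = m) \<and>
     (\<forall>c\<in>{c\<in>D. level c = 0} \<union> {c\<in>C. 1 \<le> level c}.
        \<forall>c'\<in>{c\<in>D. level c = 0} \<union> {c\<in>C. 1 \<le> level c}.
          c \<noteq> c' \<longrightarrow> reps c \<inter> reps c' = {}) \<and>
     (\<forall>(u, v)\<in>E. \<exists>c\<in>C. 1 \<le> level c \<and> v \<in> reps c \<and> (\<exists>c'\<in>children c. u \<in> reps c')) \<and>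
     (\<forall>c\<in>{c\<in>D. level c = 0} \<union> {c\<in>C. 1 \<le> level c}.
        real (card (reps c - F)) \<ge> real m * (1 - \<epsilon>)) \<and>
     (\<forall>c\<in>C. 1 \<le> level c \<longrightarrow> (\<forall>v\<in>reps c. \<forall>c'\<in>children c.
        real (card {u \<in> reps c' - F. (u, v) \<in> E}) \<ge> a * real m * (1 - \<epsilon>)))"

definition weight :: "('n \<times> 'n) set \<Rightarrow> 'n \<Rightarrow> 'n \<Rightarrow> real" where
  "weight E u v = (if (u, v) \<in> E then 1 else 0)"

definition firing ::
  "'n set \<Rightarrow> ('n \<Rightarrow> nat) \<Rightarrow> ('c \<Rightarrow> 'n set) \<Rightarrow> ('n \<times> 'n) set \<Rightarrow> 'n set \<Rightarrow> real \<Rightarrow>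
   'c set \<Rightarrow> ('n \<Rightarrow> nat \<Rightarrow> bool) \<Rightarrow> bool" where
  "firing N layer reps E F \<tau> B x \<longleftrightarrow>
     (\<forall>u\<in>N. \<forall>t. u \<in> F \<longrightarrow> \<not> x u t) \<and>
     (\<forall>u\<in>N. layer u = 0 \<longrightarrow>
        (x u 0 \<longleftrightarrow> u \<in> (\<Union>b\<in>B. reps b) - F) \<and> (\<forall>t>0. \<not> x u t)) \<and>
     (\<forall>v\<in>N. 1 \<le> layer v \<longrightarrow> v \<notin> F \<longrightarrow>
        \<not> x v 0 \<and>
        (\<forall>t\<ge>1. x v t \<longleftrightarrow>
           (\<Sum>u\<in>{u\<in>N. layer u = layer v - 1}. weight E u v * (if x u (t - 1) then 1 else 0)) \<ge> \<tau>))"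

end

theory Submission
  imports Defs
begin

lemma NO_1: "network_ok lmax D level C children N layer reps E F m a \<epsilon> \<Longrightarrow> finite N"
  unfolding network_ok_def by (elim conjE) assumption

lemma NO_2: "network_ok lmax D level C children N layer reps E F m a \<epsilon> \<Longrightarrow> (\<forall>c\<in>D. level c = 0 \<longrightarrow> reps c \<subseteq> {u\<in>N. layer u = 0} \<and> card (reps c) = m)"
  unfolding network_ok_def by (elim conjE) assumption

lemma NO_3: "network_ok lmax D level C children N layer reps E F m a \<epsilon> \<Longrightarrow> (\<forall>c\<in>C. 1 \<le> level c \<longrightarrow> reps c \<subseteq> {u\<in>N. layer u = level c} \<and> card (reps c) = m)"
  unfolding network_ok_def by (elim conjE) assumption

lemma NO_4: "network_ok lmax D level C children N layer reps E F m a \<epsilon> \<Longrightarrow> (\<forall>c\<in>{c\<in>D. level c = 0} \<union> {c\<in>C. 1 \<le> level c}.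
        \<forall>c'\<in>{c\<in>D. level c = 0} \<union> {c\<in>C. 1 \<le> level c}.
          c \<noteq> c' \<longrightarrow> reps c \<inter> reps c' = {})"
  unfolding network_ok_def by (elim conjE) assumption

lemma NO_5: "network_ok lmax D level C children N layer reps E F m a \<epsilon> \<Longrightarrow> (\<forall>c\<in>{c\<in>D. level c = 0} \<union> {c\<in>C. 1 \<le> level c}.
        real (card (reps c - F)) \<ge> real m * (1 - \<epsilon>))"
  unfolding network_ok_def by (elim conjE) assumption

lemma NO_6: "network_ok lmax D level C children N layer reps E F m a \<epsilon> \<Longrightarrow> (\<forall>c\<in>C. 1 \<le> level c \<longrightarrow> (\<forall>v\<in>reps c. \<forall>c'\<in>children c.
        real (card {u \<in> reps c' - F. (u, v) \<in> E}) \<ge> a * real m * (1 - \<epsilon>)))"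
  unfolding network_ok_def by (elim conjE) assumption

lemma reps_layer:
  assumes NO: "network_ok lmax D level C children N layer reps E F m a \<epsilon>"
    and CD: "C \<subseteq> D" and cC: "c \<in> C"
  shows "reps c \<subseteq> {u\<in>N. layer u = level c}"
proof (cases "level c = 0")
  case True
  have "c \<in> D" using CD cC by blast
  then show ?thesis using True NO_2[OF NO] by simp
next
  case False
  then have "1 \<le> level c" by simp
  then show ?thesis using cC NO_3[OF NO] by simp
qed

lemma NO_fin: "network_ok lmax D level C children N layer reps E F m a \<epsilon> \<Longrightarrow> finite N"
  by (rule NO_1)

lemma NO_F: "network_ok lmax D level C children N layer reps E F m a \<epsilon> \<Longrightarrow>
  c \<in> {c\<in>D. level c = 0} \<union> {c\<in>C. 1 \<le> level c} \<Longrightarrow> real (card (reps c - F)) \<ge> real m * (1 - \<epsilon>)"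
  using NO_5 by (rule bspec)

lemma NO_E: "network_ok lmax D level C children N layer reps E F m a \<epsilon> \<Longrightarrow>
  c \<in> C \<Longrightarrow> 1 \<le> level c \<Longrightarrow> v \<in> reps c \<Longrightarrow> c' \<in> children c \<Longrightarrow>
  real (card {u \<in> reps c' - F. (u, v) \<in> E}) \<ge> a * real m * (1 - \<epsilon>)"
  by (drule NO_6) blast

lemma FI_layer0: "firing N layer reps E F \<tau> B x \<Longrightarrow>
  \<forall>u\<in>N. layer u = 0 \<longrightarrow> (x u 0 \<longleftrightarrow> u \<in> (\<Union>b\<in>B. reps b) - F) \<and> (\<forall>t>0. \<not> x u t)"
  unfolding firing_def by (erule conjE)+

lemma FI_up: "firing N layer reps E F \<tau> B x \<Longrightarrow>
  \<forall>v\<in>N. 1 \<le> layer v \<longrightarrow> v \<notin> F \<longrightarrow>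
        \<not> x v 0 \<and>
        (\<forall>t\<ge>1. x v t \<longleftrightarrow>
           (\<Sum>u\<in>{u\<in>N. layer u = layer v - 1}. weight E u v * (if x u (t - 1) then 1 else 0)) \<ge> \<tau>)"
  unfolding firing_def by (erule conjE)+

lemma NO_disj: "network_ok lmax D level C children N layer reps E F m a \<epsilon> \<Longrightarrow>
  c1 \<in> {c\<in>D. level c = 0} \<union> {c\<in>C. 1 \<le> level c} \<Longrightarrow>
  c2 \<in> {c\<in>D. level c = 0} \<union> {c\<in>C. 1 \<le> level c} \<Longrightarrow> c1 \<noteq> c2 \<Longrightarrow> reps c1 \<inter> reps c2 = {}"
  by (drule NO_4) blast

lemma key:
  assumes CH: "concept_hierarchy lmax n k D level C children"
    and eps: "\<epsilon> \<le> 1" and apos: "a > 0" and r2: "0 \<le> r2"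
    and NO: "network_ok lmax D level C children N layer reps E F m a \<epsilon>"
    and FI: "firing N layer reps E F (a * r2 * real k * real m * (1 - \<epsilon>)) B x"
  shows "\<forall>c\<in>Blev C level children k r2 B l. \<forall>u\<in>reps c - F. x u l"
proof (induction l)
  case 0
  show ?case
  proof (intro ballI)
    fix c u assume c: "c \<in> Blev C level children k r2 B 0" and u: "u \<in> reps c - F"
    have CD: "C \<subseteq> D" using CH unfolding concept_hierarchy_def by blast
    have "reps c \<subseteq> {u\<in>N. layer u = 0}" using c reps_layer[OF NO CD, of c] by auto
    then have "u \<in> N" "layer u = 0" using u by auto
    moreover have "c \<in> B" using c by auto
    ultimately show "x u 0" using u FI_layer0[OF FI] by blast
  qed
next
  case (Suc l)
  show ?case
  proof (intro ballI)
    fix c v assume c: "c \<in> Blev C level children k r2 B (Suc l)" and v: "v \<in> reps c - F"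
    have cC: "c \<in> C" and lc: "level c = Suc l"
      and cardK: "real (card (children c \<inter> Blev C level children k r2 B l)) \<ge> r2 * real k"
      using c by auto
    have repsc: "reps c \<subseteq> {u\<in>N. layer u = Suc l}"
    proof -
      have "\<forall>c\<in>C. 1 \<le> level c \<longrightarrow> reps c \<subseteq> {u\<in>N. layer u = level c}"
        using NO unfolding network_ok_def by blast
      then show ?thesis using cC lc by fastforce
    qed
    have vN: "v \<in> N" and lv: "layer v = Suc l" using v repsc by auto
    have chsub: "children c \<subseteq> {c'\<in>C. level c' = l}" and finch: "finite (children c)"
    proof -
      have "\<forall>c\<in>C. 1 \<le> level c \<longrightarrow> children c \<subseteq> {c'\<in>C. level c' = level c - 1} \<and> finite (children c)"
        using CH unfolding concept_hierarchy_def by blast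
      then show "children c \<subseteq> {c'\<in>C. level c' = l}" "finite (children c)" using cC lc by fastforce+
    qed
    define K where "K = children c \<inter> Blev C level children k r2 B l"
    define S where "S c' = {u \<in> reps c' - F. (u, v) \<in> E}" for c'
    define U where "U = (\<Union>c'\<in>K. S c')"
    have finK: "finite K" using finch K_def by auto
    have CD: "C \<subseteq> D" using CH unfolding concept_hierarchy_def by blast
    have idx: "c' \<in> {c\<in>D. level c = 0} \<union> {c\<in>C. 1 \<le> level c}" if "c' \<in> K" for c'
      using that chsub CD K_def by (cases l) auto
    have repsl: "reps c' \<subseteq> {u\<in>N. layer u = l}" if "c' \<in> K" for c'
    proof -
      have "c' \<in> C" "level c' = l" using that chsub K_def by auto
      then show ?thesis using reps_layer[OF NO CD, of c'] by simp
    qed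
    have finN: "finite N" using NO_fin[OF NO] .
    have finS: "finite (S c')" if "c' \<in> K" for c'
    proof -
      have "S c' \<subseteq> N" using repsl[OF that] unfolding S_def by auto
      then show ?thesis using finN by (rule finite_subset)
    qed
    have disj: "S c1 \<inter> S c2 = {}" if "c1 \<in> K" "c2 \<in> K" "c1 \<noteq> c2" for c1 c2
    proof -
      have "reps c1 \<inter> reps c2 = {}" using NO_disj[OF NO idx[OF that(1)] idx[OF that(2)] that(3)] .
      then show ?thesis unfolding S_def by auto
    qed
    have cardU: "card U = (\<Sum>c'\<in>K. card (S c'))"
      unfolding U_def using finK finS disj by (intro card_UN_disjoint) auto
    have Sbig: "real (card (S c')) \<ge> a * real m * (1 - \<epsilon>)" if "c' \<in> K" for c'
      using NO_E[OF NO cC, of v c'] lc v that K_def unfolding S_def by auto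
    have "real (card U) = (\<Sum>c'\<in>K. real (card (S c')))" using cardU by simp
    also have "\<dots> \<ge> (\<Sum>c'\<in>K. a * real m * (1 - \<epsilon>))" using Sbig by (intro sum_mono) auto
    finally have "real (card U) \<ge> real (card K) * (a * real m * (1 - \<epsilon>))" by simp
    moreover have "real (card K) * (a * real m * (1 - \<epsilon>)) \<ge> r2 * real k * (a * real m * (1 - \<epsilon>))"
      using cardK K_def apos eps by (intro mult_right_mono) auto
    ultimately have Ubig: "real (card U) \<ge> a * r2 * real k * real m * (1 - \<epsilon>)"
      by (simp add: algebra_simps)
    define L where "L = {u\<in>N. layer u = layer v - 1}"
    have UL: "U \<subseteq> L" unfolding U_def L_def S_def using repsl lv by auto
    have finL: "finite L" using finN L_def by auto
    have one: "weight E u v * (if x u l then 1 else 0) = (1::real)" if uU: "u \<in> U" for u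
    proof -
      obtain c' where "c' \<in> K" "u \<in> S c'" using uU U_def by auto
      then have "c' \<in> Blev C level children k r2 B l" "u \<in> reps c' - F" "(u, v) \<in> E"
        unfolding K_def S_def by auto
      then have "x u l" "(u, v) \<in> E" using Suc.IH by blast+
      then show ?thesis by (simp add: weight_def)
    qed
    have "(\<Sum>u\<in>U. weight E u v * (if x u l then 1 else 0)) = (\<Sum>u\<in>U. (1::real))"
      by (rule sum.cong) (simp_all add: one)
    then have "real (card U) = (\<Sum>u\<in>U. weight E u v * (if x u l then 1 else 0))"
      by simp
    also have "\<dots> \<le> (\<Sum>u\<in>L. weight E u v * (if x u l then 1 else 0))"
      using UL finL by (intro sum_mono2) (auto simp: weight_def)
    finally have S: "(\<Sum>u\<in>L. weight E u v * (if x u (Suc l - 1) then 1 else 0))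
        \<ge> a * r2 * real k * real m * (1 - \<epsilon>)" using Ubig by (simp only: diff_Suc_1)
    note FW = FI_up[OF FI]
    have l1: "1 \<le> layer v" and vF: "v \<notin> F" using lv v by auto
    have s1: "1 \<le> Suc l" by simp
    have "x v (Suc l) \<longleftrightarrow>
           (\<Sum>u\<in>L. weight E u v * (if x u (Suc l - 1) then 1 else 0)) \<ge> a * r2 * real k * real m * (1 - \<epsilon>)"
      unfolding L_def using conjunct2[OF FW[rule_format, OF vN l1 vF], rule_format, OF s1] .
    then show "x v (Suc l)" using S by (simp only:)
  qed
qed

theorem theorem8p2:
  fixes lmax n k m :: nat
    and D C :: "'c set" and level :: "'c \<Rightarrow> nat" and children :: "'c \<Rightarrow> 'c set"
    and N :: "'n set" and layer :: "'n \<Rightarrow> nat" and reps :: "'c \<Rightarrow> 'n set"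
    and E :: "('n \<times> 'n) set" and F :: "'n set"
    and r1 r2 \<epsilon> a :: real
    and B :: "'c set" and x :: "'n \<Rightarrow> nat \<Rightarrow> bool"
  assumes "concept_hierarchy lmax n k D level C children"
    and "0 \<le> r1" "r1 \<le> 1" "0 \<le> r2" "r2 \<le> 1" "0 \<le> \<epsilon>" "\<epsilon> \<le> 1"
    and "a > 0" "r1 \<le> a * r2 * (1 - \<epsilon>)"
    and "m > 0"
    and "network_ok lmax D level C children N layer reps E F m a \<epsilon>"
    and "B \<subseteq> {c\<in>C. level c = 0}"
    and "firing N layer reps E F (a * r2 * real k * real m * (1 - \<epsilon>)) B x"
  shows "\<forall>c\<in>supp lmax C level children k r2 B.
           real (card {v\<in>reps c. x v (level c)}) \<ge> real m * (1 - \<epsilon>)"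
proof
  fix c assume "c \<in> supp lmax C level children k r2 B"
  then obtain l where c: "c \<in> Blev C level children k r2 B l" unfolding supp_def by auto
  have lc1: "level c = l" using c by (cases l) auto
  have lc2: "c \<in> C" using c by (cases l) auto
  note lc = lc1 lc2
  have CD: "C \<subseteq> D" using assms(1) unfolding concept_hierarchy_def by blast
  have idx: "c \<in> {c\<in>D. level c = 0} \<union> {c\<in>C. 1 \<le> level c}" using lc CD by (cases l) auto
  have fin: "finite (reps c)"
  proof -
    have "finite N" using NO_fin[OF assms(11)] .
    moreover have "reps c \<subseteq> N" using reps_layer[OF assms(11) CD lc(2)] by auto
    ultimately show ?thesis by (rule rev_finite_subset)
  qed
  have "reps c - F \<subseteq> {v\<in>reps c. x v (level c)}"
    using key[OF assms(1) assms(7) assms(8) assms(4) assms(11) assms(13), of l] c lc by auto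
  then have "card (reps c - F) \<le> card {v\<in>reps c. x v (level c)}"
    using fin by (intro card_mono) auto
  moreover have "real (card (reps c - F)) \<ge> real m * (1 - \<epsilon>)"
    using NO_F[OF assms(11) idx] .
  ultimately show "real (card {v\<in>reps c. x v (level c)}) \<ge> real m * (1 - \<epsilon>)" by linarith
qed

end
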